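(* In the setting below, suppose that $\tau_I = 0$ for all macrostates $I$ and that the augmented Markov kernel satisfies $$T(x,I,s;dy,J,t) = \int \eta_I(dz)\, T(z,I,\tau_I;dy,J,t)$$ for all $(x,I,s)$, $(dy,J,t)$. Then the memory kernel matrices satisfy $\mathcal K(n\tau) = 0$ for all integers $n>1$.
   Context: $X(t)$ is a Markov process on microstates partitioned into finitely many macrostates, with macroscopic time step $\tau>0$, decorrelation times $\tau_I$, and quasistationary distribution $\eta_I$ in each macrostate $I$ (i.e. $\eta_I(\cdot)=\int\eta_I(dx)\mathbb P(X(t)\in\cdot\mid X(0)=x,\ X(s)\in I,\ s\le t)$). The jump process $R(t)$ (at multiples of $\tau$) jumps from its current macrostate $I$ to $J\ne I$ at time $t$ iff $X(t-c)\in J$ for $0\le c\le\tau_J$. $C(t)$ is the consecutive time $X(t)$ has spent in its current macrostate, stopped at $\tau_J$ if $X(t)\in J$. $T(x,I,s;dy,J,t)=\mathbb P^{x,I,s}[(X(\tau),R(\tau),C(\tau))\in(dy,J,t)]$ is the one-step kernel of the augmented chain $(X,R,C)$, acting on functions by $Tf(x,I,s)=\int\sum_{J,t}T(x,I,s;dy,J,t)f(y,J,t)$. The projector $P$ is $Pf(x,I,s)=\int\eta_I(dz)f(z,I,\tau_I)$, $Q=\mathrm{Id}-P$, $\chi_J(x,I,s)=\delta_{I=J}$, and the memory kernel matrices are $\mathcal K_{IJ}(n\tau) = PT(QT)^{n-1}\chi_J(x,I,s)$ for $n\ge1$. *)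

theory Defs
  imports "HOL-Probability.Probability"
begin

text \<open>Augmented states are triples (x, I, s): microstate x, macrostate I
  (value of the jump process R), and clock value s (value of C).\<close>

definition aug_space :: "'a measure \<Rightarrow> ('a \<times> 'm \<times> real) measure" where
  "aug_space M = M \<Otimes>\<^sub>M (count_space UNIV \<Otimes>\<^sub>M borel)"

definition T_op :: "('s \<Rightarrow> 's measure) \<Rightarrow> ('s \<Rightarrow> real) \<Rightarrow> 's \<Rightarrow> real" where
  "T_op T f w = (\<integral>w'. f w' \<partial>(T w))"

definition P_op :: "('m \<Rightarrow> 'a measure) \<Rightarrow> ('m \<Rightarrow> real)
    \<Rightarrow> ('a \<times> 'm \<times> real \<Rightarrow> real) \<Rightarrow> 'a \<times> 'm \<times> real \<Rightarrow> real" where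
  "P_op \<eta> \<tau>c f w = (case w of (x, I, s) \<Rightarrow> \<integral>z. f (z, I, \<tau>c I) \<partial>(\<eta> I))"

definition Q_op :: "('m \<Rightarrow> 'a measure) \<Rightarrow> ('m \<Rightarrow> real)
    \<Rightarrow> ('a \<times> 'm \<times> real \<Rightarrow> real) \<Rightarrow> 'a \<times> 'm \<times> real \<Rightarrow> real" where
  "Q_op \<eta> \<tau>c f w = f w - P_op \<eta> \<tau>c f w"

definition chi :: "'m \<Rightarrow> 'a \<times> 'm \<times> real \<Rightarrow> real" where
  "chi J w = (case w of (x, I, s) \<Rightarrow> (if I = J then 1 else 0))"

text \<open>Memory kernel: K_{IJ}(n tau) = (P T (Q T)^(n-1) chi_J)(x,I,s) (for n \<ge> 1);
  the value does not depend on x, s.\<close>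
definition mem_kernel :: "('a \<times> 'm \<times> real \<Rightarrow> ('a \<times> 'm \<times> real) measure)
    \<Rightarrow> ('m \<Rightarrow> 'a measure) \<Rightarrow> ('m \<Rightarrow> real) \<Rightarrow> nat \<Rightarrow> 'm \<Rightarrow> 'a \<times> 'm \<times> real \<Rightarrow> real" where
  "mem_kernel T \<eta> \<tau>c n J =
     P_op \<eta> \<tau>c (T_op T (((\<lambda>f. Q_op \<eta> \<tau>c (T_op T f)) ^^ (n - 1)) (chi J)))"

end

theory Submission
  imports Defs
begin

lemma space_aug: "space (aug_space M) = space M \<times> UNIV"
  by (simp add: aug_space_def space_pair_measure)

lemma P_meas:
  fixes \<eta> :: "'m::finite \<Rightarrow> 'a measure"
  shows "P_op \<eta> \<tau>c f \<in> borel_measurable (aug_space M)"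
proof -
  have "P_op \<eta> \<tau>c f = (\<lambda>w. (\<lambda>I. \<integral>z. f (z, I, \<tau>c I) \<partial>(\<eta> I)) (fst (snd w)))"
    by (auto simp: P_op_def fun_eq_iff)
  also have "\<dots> \<in> borel_measurable (aug_space M)"
    unfolding aug_space_def by measurable
  finally show ?thesis .
qed

lemma chi_meas:
  shows "chi J \<in> borel_measurable (aug_space M)"
proof -
  have "chi J = (\<lambda>w. (\<lambda>I. if I = J then 1 else 0::real) (fst (snd w)))"
    by (auto simp: chi_def fun_eq_iff)
  also have "\<dots> \<in> borel_measurable (aug_space M)"
    unfolding aug_space_def by measurable
  finally show ?thesis .
qed

theorem theorem3:
  fixes M :: "'a measure"
    and T :: "'a \<times> ('m::finite) \<times> real \<Rightarrow> ('a \<times> 'm \<times> real) measure"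
    and \<eta> :: "'m \<Rightarrow> 'a measure"
    and \<tau>c :: "'m \<Rightarrow> real"
  assumes T_kernel: "T \<in> measurable (aug_space M) (prob_algebra (aug_space M))"
    and eta_prob: "\<And>I. prob_space (\<eta> I)"
    and eta_sets: "\<And>I. sets (\<eta> I) = sets M"
    and tau_zero: "\<And>I. \<tau>c I = 0"
    and T_eta: "\<And>x I s A. x \<in> space M \<Longrightarrow> A \<in> sets (aug_space M) \<Longrightarrow>
        emeasure (T (x, I, s)) A = (\<integral>\<^sup>+ z. emeasure (T (z, I, \<tau>c I)) A \<partial>(\<eta> I))"
    and n_gt: "n > (1::nat)"
  shows "\<forall>I J. \<forall>x\<in>space M. \<forall>s. mem_kernel T \<eta> \<tau>c n J (x, I, s) = 0"
proof -
  let ?A = "aug_space M :: ('a \<times> 'm \<times> real) measure"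
  have Tsub: "T \<in> measurable ?A (subprob_algebra ?A)"
    using T_kernel by (rule measurable_prob_algebraD)
  have Tw: "sets (T w) = sets ?A \<and> prob_space (T w)" if "w \<in> space ?A" for w
    using measurable_space[OF T_kernel that] by (simp add: space_prob_algebra)
  have spM: "space (\<eta> I) = space M" for I
    using eta_sets sets_eq_imp_space_eq by blast
  have Tmeas: "T_op T f \<in> borel_measurable ?A" if "f \<in> borel_measurable ?A" for f
  proof -
    have "(\<lambda>N. integral\<^sup>L N f) \<in> subprob_algebra ?A \<rightarrow>\<^sub>M borel"
      using that by (rule integral_measurable_subprob_algebra)
    from measurable_compose[OF Tsub this] show ?thesis
      by (simp add: T_op_def[abs_def] comp_def)
  qed
  have Tbound: "\<bar>T_op T f w\<bar> \<le> B" if "f \<in> borel_measurable ?A" "\<forall>w\<in>space ?A. \<bar>f w\<bar> \<le> B" "w \<in> space ?A" for f B w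
  proof -
    interpret prob_space "T w" using Tw[OF that(3)] by simp
    have sp: "space (T w) = space ?A" using Tw[OF that(3)] sets_eq_imp_space_eq by blast
    have fm: "f \<in> borel_measurable (T w)"
      using that(1) measurable_cong_sets[OF conjunct1[OF Tw[OF that(3)]] refl] by blast
    have int: "integrable (T w) (\<lambda>v. \<bar>f v\<bar>)"
      by (rule integrable_const_bound[where B=B]) (use that(2) sp fm in auto)
    have "\<bar>\<integral>v. f v \<partial>T w\<bar> \<le> (\<integral>v. \<bar>f v\<bar> \<partial>T w)" by simp
    also have "\<dots> \<le> B"
      by (rule integral_le_const[OF int]) (use that(2) sp in auto)
    finally show ?thesis by (simp add: T_op_def)
  qed
  have key: "T_op T f (x, I, s) = (\<integral>z. T_op T f (z, I, \<tau>c I) \<partial>\<eta> I)"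
    if fm: "f \<in> borel_measurable ?A" and fb: "\<forall>w\<in>space ?A. \<bar>f w\<bar> \<le> B" and x: "x \<in> space M" for f B x I s
  proof -
    define K where "K = (\<lambda>z. T (z, I, \<tau>c I))"
    have pm: "(\<lambda>z. (z, I, \<tau>c I)) \<in> M \<rightarrow>\<^sub>M ?A" unfolding aug_space_def by measurable
    hence pm': "(\<lambda>z. (z, I, \<tau>c I)) \<in> \<eta> I \<rightarrow>\<^sub>M ?A"
      using measurable_cong_sets[OF eta_sets[of I] refl] by blast
    have Km: "K \<in> \<eta> I \<rightarrow>\<^sub>M subprob_algebra ?A"
      unfolding K_def using measurable_compose[OF pm' Tsub] by (simp add: comp_def)
    have ne: "space (\<eta> I) \<noteq> {}" using eta_prob prob_space.not_empty by blast
    have Kz: "sets (K z) = sets ?A" if "z \<in> space (\<eta> I)" for z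
      using Tw[of "(z, I, \<tau>c I)"] that spM by (simp add: K_def space_aug)
    have xs: "(x, I, s) \<in> space ?A" using x by (simp add: space_aug)
    have eq: "T (x, I, s) = \<eta> I \<bind> K"
    proof (rule measure_eqI)
      show "sets (T (x, I, s)) = sets (\<eta> I \<bind> K)"
        using Tw[OF xs] sets_bind[OF Kz ne] by simp
      fix A assume "A \<in> sets (T (x, I, s))"
      hence A: "A \<in> sets ?A" using Tw[OF xs] by simp
      show "emeasure (T (x, I, s)) A = emeasure (\<eta> I \<bind> K) A"
        using emeasure_bind[OF ne Km A] T_eta[OF x A] by (simp add: K_def)
    qed
    define D where "D = distr (\<eta> I) (subprob_algebra ?A) K"
    have pD: "prob_space D" unfolding D_def
      using prob_space.prob_space_distr[OF eta_prob Km] .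
    have "T_op T f (x, I, s) = (\<integral>v. f v \<partial>join D)"
      unfolding T_op_def eq D_def using bind_nonempty''[OF Km ne] by simp
    also have "\<dots> = (\<integral>M'. (\<integral>v. f v \<partial>M') \<partial>D)"
    proof (rule integral_join[where B=B and B'=1])
      show "f \<in> borel_measurable ?A" by fact
      show "\<And>x. x \<in> space ?A \<Longrightarrow> \<bar>f x\<bar> \<le> B" using fb by blast
      show "sets D = sets (subprob_algebra ?A)" by (simp add: D_def)
      show "finite_measure D" using pD by (simp add: prob_space_def)
      show "AE M' in D. emeasure M' (space M') \<le> ennreal 1"
        by (rule AE_I2) (auto simp: D_def space_subprob_algebra subprob_space.emeasure_space_le_1)
    qed
    also have "\<dots> = (\<integral>z. (\<integral>v. f v \<partial>K z) \<partial>\<eta> I)"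
      unfolding D_def
      by (rule integral_distr[OF Km integral_measurable_subprob_algebra[OF fm]])
    finally show ?thesis by (simp add: K_def T_op_def)
  qed
  define \<Phi> where "\<Phi> = (\<lambda>f. Q_op \<eta> \<tau>c (T_op T f))"
  have Phi: "\<Phi> f \<in> borel_measurable ?A \<and> (\<forall>w\<in>space ?A. \<Phi> f w = 0)"
    if fm: "f \<in> borel_measurable ?A" and fb: "\<forall>w\<in>space ?A. \<bar>f w\<bar> \<le> B" for f B
  proof
    have "\<Phi> f = (\<lambda>w. T_op T f w - P_op \<eta> \<tau>c (T_op T f) w)"
      by (simp add: \<Phi>_def Q_op_def[abs_def])
    also have "\<dots> \<in> borel_measurable ?A"
      using Tmeas[OF fm] P_meas by measurable
    finally show "\<Phi> f \<in> borel_measurable ?A" .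
    show "\<forall>w\<in>space ?A. \<Phi> f w = 0"
    proof
      fix w assume w: "w \<in> space ?A"
      obtain x I s where wd: "w = (x, I, s)" by (cases w) auto
      have x: "x \<in> space M" using w wd by (simp add: space_aug)
      show "\<Phi> f w = 0"
        using key[OF fm fb x, of I s] by (simp add: wd \<Phi>_def Q_op_def P_op_def)
    qed
  qed
  have inv: "(\<Phi> ^^ m) (chi J) \<in> borel_measurable ?A \<and> (\<exists>B. \<forall>w\<in>space ?A. \<bar>(\<Phi> ^^ m) (chi J) w\<bar> \<le> B)" for m J
  proof (induction m)
    case 0
    have "\<forall>w\<in>space ?A. \<bar>chi J w\<bar> \<le> 1" by (auto simp: chi_def split: prod.splits)
    then show ?case using chi_meas by auto
  next
    case (Suc m)
    then obtain B where "\<forall>w\<in>space ?A. \<bar>(\<Phi> ^^ m) (chi J) w\<bar> \<le> B" by blast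
    from Phi[OF conjunct1[OF Suc] this] show ?case by auto
  qed
  show ?thesis
  proof (intro allI ballI)
    fix I J x s assume x: "x \<in> space M"
    obtain m where n: "n - 1 = Suc m" proof -
      have "n - 1 = Suc (n - 2)" using n_gt by arith
      thus ?thesis using that by blast
    qed
    define g where "g = \<Phi> ((\<Phi> ^^ m) (chi J))"
    obtain B where "\<forall>w\<in>space ?A. \<bar>(\<Phi> ^^ m) (chi J) w\<bar> \<le> B" using inv by blast
    with Phi[OF conjunct1[OF inv] this] have g0: "\<forall>w\<in>space ?A. g w = 0" by (simp add: g_def)
    have Tg: "T_op T g (z, I, \<tau>c I) = 0" if z: "z \<in> space M" for z
    proof -
      have zs: "(z, I, \<tau>c I) \<in> space ?A" using z by (simp add: space_aug)
      have sp: "space (T (z, I, \<tau>c I)) = space ?A" using Tw[OF zs] sets_eq_imp_space_eq by blast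
      have "(\<integral>v. g v \<partial>T (z, I, \<tau>c I)) = (\<integral>v. 0 \<partial>T (z, I, \<tau>c I))"
        by (rule Bochner_Integration.integral_cong[OF refl]) (use g0 sp in auto)
      thus ?thesis by (simp add: T_op_def)
    qed
    have "mem_kernel T \<eta> \<tau>c n J (x, I, s) = (\<integral>z. T_op T g (z, I, \<tau>c I) \<partial>\<eta> I)"
      unfolding mem_kernel_def n g_def by (simp add: P_op_def \<Phi>_def[symmetric])
    also have "\<dots> = (\<integral>z. 0 \<partial>\<eta> I)"
      by (rule Bochner_Integration.integral_cong[OF refl]) (use Tg spM in auto)
    finally show "mem_kernel T \<eta> \<tau>c n J (x, I, s) = 0" by simp
  qed
qed

end
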